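(* Let $p\in\mathcal{X}$. Then there exists a unique forkless polynomial $q\in\mathcal{X}$ such that $p\equiv q\pmod{\mathcal{J}}$.
   Context: Let $\mathbf{k}$ be a commutative ring, let $\beta,\alpha\in\mathbf{k}$, and let $n$ be a positive integer. Let $\mathcal{X}=\mathbf{k}[x_{i,j}\mid 1\le i<j\le n]$ be the polynomial ring over $\mathbf{k}$ in the indeterminates $x_{i,j}$, and $\mathfrak{M}$ the set of monomials in them. Let $\mathcal{J}$ be the ideal of $\mathcal{X}$ generated by all elements $x_{i,j}x_{j,k}-x_{i,k}(x_{i,j}+x_{j,k}+\beta)-\alpha$ for $1\le i<j<k\le n$. A monomial $\mathfrak{m}\in\mathfrak{M}$ is forkless if there is no triple $1\le i<j<k\le n$ with $x_{i,j}x_{i,k}\mid\mathfrak{m}$; a polynomial is forkless if it is a $\mathbf{k}$-linear combination of forkless monomials. *)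

theory Defs
  imports "HOL-Library.Poly_Mapping"
begin

text \<open>Variables x_{i,j} are indexed by pairs (i,j); monomials are finitely supported
  exponent vectors; polynomials are finitely supported coefficient functions on monomials.\<close>

type_synonym monom = "(nat \<times> nat) \<Rightarrow>\<^sub>0 nat"
type_synonym 'a mpoly = "monom \<Rightarrow>\<^sub>0 'a"

definition var_index :: "nat \<Rightarrow> (nat \<times> nat) set" where
  "var_index n = {(i, j). 1 \<le> i \<and> i < j \<and> j \<le> n}"

definition xmon :: "nat \<Rightarrow> nat \<Rightarrow> monom" where
  "xmon i j = Poly_Mapping.single (i, j) 1"

definition xvar :: "nat \<Rightarrow> nat \<Rightarrow> 'a::comm_ring_1 mpoly" where
  "xvar i j = Poly_Mapping.single (xmon i j) 1"

definition const :: "'a::comm_ring_1 \<Rightarrow> 'a mpoly" where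
  "const c = Poly_Mapping.single 0 c"

definition is_monomial_X :: "nat \<Rightarrow> monom \<Rightarrow> bool" where
  "is_monomial_X n m \<longleftrightarrow> Poly_Mapping.keys m \<subseteq> var_index n"

definition polyX :: "nat \<Rightarrow> 'a::comm_ring_1 mpoly set" where
  "polyX n = {p. \<forall>m \<in> Poly_Mapping.keys p. is_monomial_X n m}"

definition mon_dvd :: "monom \<Rightarrow> monom \<Rightarrow> bool" where
  "mon_dvd a b \<longleftrightarrow> (\<forall>v. Poly_Mapping.lookup a v \<le> Poly_Mapping.lookup b v)"

definition forkless_mon :: "nat \<Rightarrow> monom \<Rightarrow> bool" where
  "forkless_mon n m \<longleftrightarrow>
     \<not> (\<exists>i j k. 1 \<le> i \<and> i < j \<and> j < k \<and> k \<le> n \<and> mon_dvd (xmon i j + xmon i k) m)"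

definition forkless :: "nat \<Rightarrow> 'a::comm_ring_1 mpoly \<Rightarrow> bool" where
  "forkless n p \<longleftrightarrow> (\<forall>m \<in> Poly_Mapping.keys p. forkless_mon n m)"

definition gens :: "nat \<Rightarrow> 'a::comm_ring_1 \<Rightarrow> 'a \<Rightarrow> 'a mpoly set" where
  "gens n \<beta> \<alpha> = {xvar i j * xvar j k - xvar i k * (xvar i j + xvar j k + const \<beta>) - const \<alpha>
                  | i j k. 1 \<le> i \<and> i < j \<and> j < k \<and> k \<le> n}"

definition idealJ :: "nat \<Rightarrow> 'a::comm_ring_1 \<Rightarrow> 'a \<Rightarrow> 'a mpoly set" where
  "idealJ n \<beta> \<alpha> = {(\<Sum>g\<in>S. c g * g) | S c. finite S \<and> S \<subseteq> gens n \<beta> \<alpha> \<and> (\<forall>g\<in>S. c g \<in> polyX n)}"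

end

theory Submission
  imports Defs
begin

definition mon :: "monom \<Rightarrow> 'a::comm_ring_1 mpoly" where
  "mon m = Poly_Mapping.single m 1"

lemma lookup_const_mult: "Poly_Mapping.lookup (const c * p) m = c * Poly_Mapping.lookup p m"
  unfolding const_def
  by (simp add: mult_map_scale_conv_mult[symmetric] map.rep_eq when_def)

lemma keys_const_mult: "Poly_Mapping.keys (const c * p) \<subseteq> Poly_Mapping.keys p"
  by (auto simp: in_keys_iff lookup_const_mult)

lemma const_mult_const: "const a * const b = const (a * b)"
  unfolding const_def by (simp add: mult_single)

lemma xvar_mon: "xvar i j = mon (xmon i j)"
  by (simp add: xvar_def mon_def)

lemma mon_add: "mon (a + b) = (mon a * mon b :: 'a::comm_ring_1 mpoly)"
  by (simp add: mon_def mult_single)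

lemma keys_mon: "Poly_Mapping.keys (mon m :: 'a::comm_ring_1 mpoly) = {m}"
  by (simp add: mon_def)

lemma keys_mon_mult: "Poly_Mapping.keys (mon u * q :: 'a::comm_ring_1 mpoly) \<subseteq> (\<lambda>s. u + s) ` Poly_Mapping.keys q"
  using keys_mult[of "mon u" q] by (auto simp: keys_mon)

lemma single_as_const: "Poly_Mapping.single m c = const c * mon m"
  by (simp add: const_def mon_def mult_single)

lemma poly_expand: "p = (\<Sum>m\<in>Poly_Mapping.keys p. Poly_Mapping.single m (Poly_Mapping.lookup p m))"
  by (rule poly_mapping_eqI) (simp add: lookup_sum lookup_single when_def in_keys_iff)

definition lin :: "(monom \<Rightarrow> 'a::comm_ring_1 mpoly) \<Rightarrow> 'a mpoly \<Rightarrow> 'a mpoly" where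
  "lin f p = (\<Sum>m\<in>Poly_Mapping.keys p. const (Poly_Mapping.lookup p m) * f m)"

lemma const_0[simp]: "const 0 = 0"
  by (simp add: const_def)

lemma const_add: "const (a + b) = const a + const b"
  by (simp add: const_def single_add)

lemma const_uminus: "const (- a) = - const a"
  by (simp add: const_def single_uminus)

lemma lin_superset:
  assumes "finite S" "Poly_Mapping.keys p \<subseteq> S"
  shows "lin f p = (\<Sum>m\<in>S. const (Poly_Mapping.lookup p m) * f m)"
  unfolding lin_def
  by (rule sum.mono_neutral_left) (use assms in \<open>auto simp: in_keys_iff\<close>)

lemma lin_zero[simp]: "lin f 0 = 0"
  by (simp add: lin_def)

lemma lin_add: "lin f (p + q) = lin f p + lin f q"
proof -
  let ?S = "Poly_Mapping.keys p \<union> Poly_Mapping.keys q"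
  have "lin f (p + q) = (\<Sum>m\<in>?S. const (Poly_Mapping.lookup (p + q) m) * f m)"
    by (rule lin_superset) (auto simp: keys_add)
  also have "\<dots> = (\<Sum>m\<in>?S. const (Poly_Mapping.lookup p m) * f m) + (\<Sum>m\<in>?S. const (Poly_Mapping.lookup q m) * f m)"
    by (simp add: lookup_add const_add distrib_right sum.distrib)
  also have "\<dots> = lin f p + lin f q"
    by (simp add: lin_superset[symmetric])
  finally show ?thesis .
qed

lemma lin_uminus: "lin f (- p) = - lin f p"
proof -
  have "lin f (- p) = (\<Sum>m\<in>Poly_Mapping.keys p. const (Poly_Mapping.lookup (- p) m) * f m)"
    by (rule lin_superset) auto
  also have "\<dots> = - lin f p"
    by (simp add: lin_def const_uminus sum_negf)
  finally show ?thesis .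
qed

lemma lin_diff: "lin f (p - q) = lin f p - lin f q"
  using lin_add[of f p "- q"] by (simp add: lin_uminus)

lemma lin_const_mult: "lin f (const c * p) = const c * lin f p"
proof -
  have "lin f (const c * p) = (\<Sum>m\<in>Poly_Mapping.keys p. const (Poly_Mapping.lookup (const c * p) m) * f m)"
    by (rule lin_superset) (auto simp: keys_const_mult)
  also have "\<dots> = const c * lin f p"
    by (simp add: lin_def lookup_const_mult const_mult_const[symmetric] sum_distrib_left mult.assoc)
  finally show ?thesis .
qed

lemma lin_single: "lin f (Poly_Mapping.single m c) = const c * f m"
  by (cases "c = 0") (simp_all add: lin_def)

lemma lin_mon: "lin f (mon m) = f m"
  by (simp add: mon_def lin_single const_def)

lemma lin_sum: "finite I \<Longrightarrow> lin f (\<Sum>i\<in>I. g i) = (\<Sum>i\<in>I. lin f (g i))"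
  by (induction I rule: finite_induct) (simp_all add: lin_add)

lemma lin_cong: "(\<And>m. m \<in> Poly_Mapping.keys p \<Longrightarrow> f m = g m) \<Longrightarrow> lin f p = lin g p"
  by (simp add: lin_def)

lemma keys_lin: "Poly_Mapping.keys (lin f p) \<subseteq> (\<Union>m\<in>Poly_Mapping.keys p. Poly_Mapping.keys (f m))"
  unfolding lin_def using keys_sum keys_const_mult by fastforce

lemma lin_const_mult_fun: "lin (\<lambda>m. const c * f m) p = const c * lin f p"
  by (simp add: lin_def sum_distrib_left mult.left_commute)

lemma keys_diff_sub: "Poly_Mapping.keys (a - b :: 'a::comm_ring_1 mpoly) \<subseteq> Poly_Mapping.keys a \<union> Poly_Mapping.keys b"
  by (auto simp: in_keys_iff lookup_minus)

lemma lookup_xmon: "Poly_Mapping.lookup (xmon i j) v = (if v = (i, j) then 1 else 0)"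
  by (simp add: xmon_def lookup_single when_def)

lemma polyX_uminus: "p \<in> polyX n \<Longrightarrow> - p \<in> polyX n"
  by (simp add: polyX_def in_keys_iff)

lemma polyX_zero: "0 \<in> polyX n"
  by (simp add: polyX_def)

lemma polyX_add: "p \<in> polyX n \<Longrightarrow> q \<in> polyX n \<Longrightarrow> p + q \<in> polyX n"
  using keys_add[of p q] by (auto simp: polyX_def)

lemma polyX_const_mult: "p \<in> polyX n \<Longrightarrow> const c * p \<in> polyX n"
  using keys_const_mult[of c p] by (auto simp: polyX_def)

lemma idealJ_0: "0 \<in> idealJ n b a"
  unfolding idealJ_def by (rule CollectI, rule exI[of _ "{}"]) auto

lemma idealJ_gen: "c \<in> polyX n \<Longrightarrow> g \<in> gens n b a \<Longrightarrow> c * g \<in> idealJ n b a"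
  unfolding idealJ_def by (rule CollectI, rule exI[of _ "{g}"], rule exI[of _ "\<lambda>_. c"]) auto

lemma idealJ_add:
  assumes "x \<in> idealJ n b a" "y \<in> idealJ n b a"
  shows "x + y \<in> idealJ n b a"
proof -
  obtain S1 c1 where x: "x = (\<Sum>g\<in>S1. c1 g * g)" "finite S1" "S1 \<subseteq> gens n b a" "\<forall>g\<in>S1. c1 g \<in> polyX n"
    using assms(1) unfolding idealJ_def by blast
  obtain S2 c2 where y: "y = (\<Sum>g\<in>S2. c2 g * g)" "finite S2" "S2 \<subseteq> gens n b a" "\<forall>g\<in>S2. c2 g \<in> polyX n"
    using assms(2) unfolding idealJ_def by blast
  define c where "c g = (if g \<in> S1 then c1 g else 0) + (if g \<in> S2 then c2 g else 0)" for g
  have s1: "(\<Sum>g\<in>S1 \<union> S2. (if g \<in> S1 then c1 g else 0) * g) = (\<Sum>g\<in>S1. c1 g * g)"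
    by (rule sum.mono_neutral_cong_right) (use x y in auto)
  have s2: "(\<Sum>g\<in>S1 \<union> S2. (if g \<in> S2 then c2 g else 0) * g) = (\<Sum>g\<in>S2. c2 g * g)"
    by (rule sum.mono_neutral_cong_right) (use x y in auto)
  have "x + y = (\<Sum>g\<in>S1 \<union> S2. c g * g)"
    unfolding c_def by (simp add: distrib_right sum.distrib s1 s2 x(1) y(1))
  moreover have "\<forall>g\<in>S1 \<union> S2. c g \<in> polyX n"
    using x(4) y(4) by (auto simp: c_def intro!: polyX_add polyX_zero)
  ultimately show ?thesis
    unfolding idealJ_def using x(2,3) y(2,3) by blast
qed

lemma idealJ_smult:
  assumes "x \<in> idealJ n b a"
  shows "const c * x \<in> idealJ n b a"
proof -
  obtain S d where x: "x = (\<Sum>g\<in>S. d g * g)" "finite S" "S \<subseteq> gens n b a" "\<forall>g\<in>S. d g \<in> polyX n"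
    using assms unfolding idealJ_def by blast
  have "const c * x = (\<Sum>g\<in>S. (const c * d g) * g)"
    by (simp add: x(1) sum_distrib_left mult.assoc)
  moreover have "\<forall>g\<in>S. const c * d g \<in> polyX n" using x(4) polyX_const_mult by blast
  ultimately show ?thesis unfolding idealJ_def mem_Collect_eq
    by (intro exI[of _ S] exI[of _ "\<lambda>g. const c * d g"]) (use x(2,3) in simp)
qed

lemma idealJ_sum: "finite I \<Longrightarrow> (\<And>i. i \<in> I \<Longrightarrow> f i \<in> idealJ n b a) \<Longrightarrow> sum f I \<in> idealJ n b a"
  by (induction I rule: finite_induct) (auto intro: idealJ_0 idealJ_add)

locale fk =
  fixes n :: nat and \<beta> \<alpha> :: "'a::comm_ring_1"
begin

definition w :: "nat \<times> nat \<Rightarrow> nat" where "w v = n + 1 - fst v"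

definition wt :: "monom \<Rightarrow> nat" where
  "wt M = (\<Sum>v\<in>Poly_Mapping.keys M. Poly_Mapping.lookup M v * w v)"

lemma wt_add: "wt (A + B) = wt A + wt B"
  unfolding wt_def by (rule setsum_keys_plus_distrib) (simp_all add: distrib_right)

lemma wt_zero[simp]: "wt 0 = 0"
  by (simp add: wt_def)

lemma wt_xmon[simp]: "wt (xmon i j) = n + 1 - i"
  by (simp add: wt_def xmon_def w_def)

definition Lm :: "nat \<Rightarrow> nat \<Rightarrow> nat \<Rightarrow> monom" where
  "Lm i j k = xmon i j + xmon i k"

definition Rp :: "nat \<Rightarrow> nat \<Rightarrow> nat \<Rightarrow> 'a mpoly" where
  "Rp i j k = xvar i j * xvar j k - xvar i k * xvar j k - const \<beta> * xvar i k - const \<alpha>"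

definition Gp :: "nat \<Rightarrow> nat \<Rightarrow> nat \<Rightarrow> 'a mpoly" where
  "Gp i j k = xvar i j * xvar i k - Rp i j k"

definition forks :: "monom \<Rightarrow> (nat \<times> nat \<times> nat) set" where
  "forks M = {(i, j, k). 1 \<le> i \<and> i < j \<and> j < k \<and> k \<le> n \<and>
       1 \<le> Poly_Mapping.lookup M (i, j) \<and> 1 \<le> Poly_Mapping.lookup M (i, k)}"

definition red :: "nat \<times> nat \<times> nat \<Rightarrow> monom \<Rightarrow> 'a mpoly" where
  "red f M = (case f of (i, j, k) \<Rightarrow> mon (M - Lm i j k) * Rp i j k)"

lemma lookup_Lm: "Poly_Mapping.lookup (Lm i j k) v = (if v = (i, j) then 1 else 0) + (if v = (i, k) then 1 else 0)"
  by (simp add: Lm_def lookup_add lookup_xmon)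

lemma fork_decomp:
  assumes "(i, j, k) \<in> forks M"
  shows "M = (M - Lm i j k) + Lm i j k"
proof (rule poly_mapping_eqI)
  fix v
  show "Poly_Mapping.lookup M v = Poly_Mapping.lookup (M - Lm i j k + Lm i j k) v"
    using assms by (auto simp: forks_def lookup_add lookup_minus lookup_Lm)
qed

lemma Lm_mon: "mon (Lm i j k) = (xvar i j * xvar i k :: 'a mpoly)"
  by (simp add: Lm_def mon_add xvar_mon)

lemma keys_Rp: "Poly_Mapping.keys (Rp i j k) \<subseteq> {xmon i j + xmon j k, xmon i k + xmon j k, xmon i k, 0}"
proof -
  have e: "Rp i j k = mon (xmon i j + xmon j k) - mon (xmon i k + xmon j k)
            - Poly_Mapping.single (xmon i k) \<beta> - Poly_Mapping.single 0 \<alpha>"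
    by (simp add: Rp_def mon_add xvar_mon const_def mon_def mult_single)
  show ?thesis
    unfolding e by (auto simp: in_keys_iff lookup_minus mon_def lookup_single when_def split: if_splits)
qed

lemma wt_red_aux:
  assumes "1 \<le> i" "i < j" "j < k" "k \<le> n"
    and "m \<in> Poly_Mapping.keys (mon t * Rp i j k)"
  shows "wt m < wt (t + Lm i j k)"
proof -
  obtain s where m: "m = t + s" and s: "s \<in> Poly_Mapping.keys (Rp i j k)"
    using keys_mon_mult assms(5) by blast
  have "wt s < wt (Lm i j k)"
    using s keys_Rp[of i j k] assms(1-4) by (auto simp: wt_add Lm_def)
  then show ?thesis by (simp add: m wt_add)
qed

lemma red_wt:
  assumes "f \<in> forks M" "m \<in> Poly_Mapping.keys (red f M)"
  shows "wt m < wt M"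
proof -
  obtain i j k where f: "f = (i, j, k)" by (cases f) auto
  have "wt m < wt ((M - Lm i j k) + Lm i j k)"
    by (rule wt_red_aux) (use assms in \<open>auto simp: f forks_def red_def\<close>)
  then show ?thesis using fork_decomp[of i j k M] assms(1) f by simp
qed

primrec Nf :: "nat \<Rightarrow> monom \<Rightarrow> 'a mpoly" where
  "Nf 0 M = mon M"
| "Nf (Suc k) M = (if forks M = {} then mon M else lin (Nf k) (red (SOME f. f \<in> forks M) M))"

lemma Nf_eq: "wt M < k1 \<Longrightarrow> wt M < k2 \<Longrightarrow> Nf k1 M = Nf k2 M"
proof (induction k1 arbitrary: k2 M)
  case 0 then show ?case by simp
next
  case (Suc k1)
  then obtain k2' where k2: "k2 = Suc k2'" by (cases k2) auto
  show ?case
  proof (cases "forks M = {}")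
    case True then show ?thesis by (simp add: k2)
  next
    case False
    then have sf: "(SOME f. f \<in> forks M) \<in> forks M" by (meson ex_in_conv someI_ex)
    have "lin (Nf k1) (red (SOME f. f \<in> forks M) M) = lin (Nf k2') (red (SOME f. f \<in> forks M) M)"
    proof (rule lin_cong)
      fix m assume "m \<in> Poly_Mapping.keys (red (SOME f. f \<in> forks M) M)"
      then have "wt m < wt M" by (rule red_wt[OF sf])
      then show "Nf k1 m = Nf k2' m" using Suc k2 by (intro Suc.IH) auto
    qed
    then show ?thesis by (simp add: k2 False)
  qed
qed

definition N :: "monom \<Rightarrow> 'a mpoly" where "N M = Nf (Suc (wt M)) M"

abbreviation E :: "'a mpoly \<Rightarrow> 'a mpoly" where "E \<equiv> lin N"

lemma N_unfold: "N M = (if forks M = {} then mon M else E (red (SOME f. f \<in> forks M) M))"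
proof (cases "forks M = {}")
  case True then show ?thesis by (simp add: N_def)
next
  case False
  then have sf: "(SOME f. f \<in> forks M) \<in> forks M" by (meson ex_in_conv someI_ex)
  have "lin (Nf (wt M)) (red (SOME f. f \<in> forks M) M) = E (red (SOME f. f \<in> forks M) M)"
  proof (rule lin_cong)
    fix m assume "m \<in> Poly_Mapping.keys (red (SOME f. f \<in> forks M) M)"
    then have "wt m < wt M" by (rule red_wt[OF sf])
    then show "Nf (wt M) m = N m" unfolding N_def by (intro Nf_eq) auto
  qed
  then show ?thesis using False by (simp add: N_def)
qed


lemma keys_const: "Poly_Mapping.keys (const c :: 'b::comm_ring_1 mpoly) \<subseteq> {0}"
  by (simp add: const_def)

lemma keys_xvar: "Poly_Mapping.keys (xvar a b :: 'b::comm_ring_1 mpoly) = {xmon a b}"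
  by (simp add: xvar_mon keys_mon)

lemma wt_Rp:
  assumes "1 \<le> i" "i < j" "j < k" "k \<le> n" "s \<in> Poly_Mapping.keys (Rp i j k)"
  shows "wt s < wt (Lm i j k)"
  using assms keys_Rp[of i j k] by (auto simp: wt_add Lm_def)

lemma fork_of_L: "1 \<le> i \<Longrightarrow> i < j \<Longrightarrow> j < k \<Longrightarrow> k \<le> n \<Longrightarrow> (i, j, k) \<in> forks (t + Lm i j k)"
  by (simp add: forks_def lookup_add lookup_Lm)

lemma red_L: "red (i, j, k) (t + Lm i j k) = mon t * Rp i j k"
  by (simp add: red_def)

lemma zero_comb:
  assumes Z: "\<And>M' f. wt M' < W \<Longrightarrow> f \<in> forks M' \<Longrightarrow> N M' = E (red f M')"
    and v: "1 \<le> i" "i < j" "j < k" "k \<le> n"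
    and c: "\<And>t. t \<in> Poly_Mapping.keys c \<Longrightarrow> wt (t + Lm i j k) < W"
  shows "E (c * Gp i j k) = 0"
proof -
  have sg: "E (Poly_Mapping.single t a * Gp i j k) = 0" if t: "t \<in> Poly_Mapping.keys c" for t a
  proof -
    have "Poly_Mapping.single t a * Gp i j k = const a * (mon (t + Lm i j k) - mon t * Rp i j k)"
      by (simp add: Gp_def single_as_const mon_add Lm_mon algebra_simps)
    then have "E (Poly_Mapping.single t a * Gp i j k) = const a * (N (t + Lm i j k) - E (mon t * Rp i j k))"
      by (simp add: lin_const_mult lin_diff lin_mon)
    also have "N (t + Lm i j k) = E (red (i, j, k) (t + Lm i j k))"
      by (rule Z) (use c[OF t] fork_of_L[OF v] in auto)
    finally show ?thesis by (simp add: red_L)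
  qed
  have "c * Gp i j k = (\<Sum>t\<in>Poly_Mapping.keys c. Poly_Mapping.single t (Poly_Mapping.lookup c t) * Gp i j k)"
    by (subst poly_expand[of c]) (simp add: sum_distrib_right)
  then show ?thesis by (simp add: lin_sum sg)
qed

lemma triple:
  assumes Z: "\<And>M' f. wt M' < wt M \<Longrightarrow> f \<in> forks M' \<Longrightarrow> N M' = E (red f M')"
    and o: "1 \<le> i" "i < j" "j < k" "k < l" "l \<le> n"
    and lk: "1 \<le> Poly_Mapping.lookup M (i, j)" "1 \<le> Poly_Mapping.lookup M (i, k)" "1 \<le> Poly_Mapping.lookup M (i, l)"
  shows "E (red (i, j, k) M) = E (red (i, j, l) M) \<and> E (red (i, j, k) M) = E (red (i, k, l) M)"
proof -
  define T where "T = xmon i j + xmon i k + xmon i l"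
  define u where "u = M - T"
  have M: "M = u + T"
    by (rule poly_mapping_eqI) (use o lk in \<open>auto simp: u_def T_def lookup_add lookup_minus lookup_xmon\<close>)
  have wM: "wt M = wt u + wt T" using M wt_add by simp
  have e1: "M - Lm i j k = u + xmon i l"
    by (rule poly_mapping_eqI) (use o in \<open>auto simp: M T_def Lm_def lookup_add lookup_minus lookup_xmon\<close>)
  have e2: "M - Lm i j l = u + xmon i k"
    by (rule poly_mapping_eqI) (use o in \<open>auto simp: M T_def Lm_def lookup_add lookup_minus lookup_xmon\<close>)
  have e3: "M - Lm i k l = u + xmon i j"
    by (rule poly_mapping_eqI) (use o in \<open>auto simp: M T_def Lm_def lookup_add lookup_minus lookup_xmon\<close>)
  have r1: "red (i, j, k) M = mon u * (xvar i l * Rp i j k)"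
    by (simp add: red_def e1 mon_add xvar_mon mult.assoc)
  have r2: "red (i, j, l) M = mon u * (xvar i k * Rp i j l)"
    by (simp add: red_def e2 mon_add xvar_mon mult.assoc)
  have r3: "red (i, k, l) M = mon u * (xvar i j * Rp i k l)"
    by (simp add: red_def e3 mon_add xvar_mon mult.assoc)
  have zc: "E (mon u * c * Gp p q r) = 0"
    if "1 \<le> p" "p < q" "q < r" "r \<le> n" "\<And>s. s \<in> Poly_Mapping.keys c \<Longrightarrow> wt (s + Lm p q r) < wt T" for c p q r
  proof (rule zero_comb[OF Z that(1-4)])
    fix t assume "t \<in> Poly_Mapping.keys (mon u * c)"
    then obtain s where "t = u + s" "s \<in> Poly_Mapping.keys c" using keys_mon_mult by blast
    then show "wt (t + Lm p q r) < wt M" using that(5) by (simp add: wM wt_add)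
  qed
  have P1: "xvar i l * Rp i j k - xvar i k * Rp i j l =
     xvar j k * Gp i j l - xvar j k * Gp i k l - xvar j l * Gp i j k + xvar j l * Gp i k l
     - xvar i l * Gp j k l + xvar i k * Gp j k l"
    by (simp add: Gp_def Rp_def algebra_simps)
  have P2: "xvar i l * Rp i j k - xvar i j * Rp i k l =
     xvar j k * Gp i j l - xvar j k * Gp i k l - const \<beta> * Gp i k l - xvar k l * Gp i j k
     + xvar k l * Gp i j l + const \<beta> * Gp i j l + xvar i j * Gp j k l - xvar i l * Gp j k l"
    by (simp add: Gp_def Rp_def algebra_simps)
  have wts: "wt (xmon j k + Lm i j l) < wt T" "wt (xmon j k + Lm i k l) < wt T"
     "wt (xmon j l + Lm i j k) < wt T" "wt (xmon j l + Lm i k l) < wt T"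
     "wt (xmon i l + Lm j k l) < wt T" "wt (xmon i k + Lm j k l) < wt T"
     "wt (0 + Lm i k l) < wt T" "wt (0 + Lm i j l) < wt T"
     "wt (xmon k l + Lm i j k) < wt T" "wt (xmon k l + Lm i j l) < wt T"
     "wt (xmon i j + Lm j k l) < wt T"
    using o by (simp_all add: T_def Lm_def wt_add)
  have kc: "s \<in> Poly_Mapping.keys (const \<beta>) \<Longrightarrow> s = 0" for s using keys_const by blast
  have "E (red (i, j, k) M) - E (red (i, j, l) M) = E (mon u * (xvar i l * Rp i j k - xvar i k * Rp i j l))"
    by (simp add: r1 r2 lin_diff right_diff_distrib)
  also have "\<dots> = E (mon u * xvar j k * Gp i j l) - E (mon u * xvar j k * Gp i k l)
     - E (mon u * xvar j l * Gp i j k) + E (mon u * xvar j l * Gp i k l)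
     - E (mon u * xvar i l * Gp j k l) + E (mon u * xvar i k * Gp j k l)"
    unfolding P1 by (simp add: algebra_simps lin_add lin_diff)
  also have "\<dots> = 0"
  proof -
    have "E (mon u * xvar j k * Gp i j l) = 0" "E (mon u * xvar j k * Gp i k l) = 0"
      "E (mon u * xvar j l * Gp i j k) = 0" "E (mon u * xvar j l * Gp i k l) = 0"
      "E (mon u * xvar i l * Gp j k l) = 0" "E (mon u * xvar i k * Gp j k l) = 0"
      using o wts by (auto intro!: zc simp: keys_xvar)
    then show ?thesis by simp
  qed
  finally have A: "E (red (i, j, k) M) = E (red (i, j, l) M)" by simp
  have "E (red (i, j, k) M) - E (red (i, k, l) M) = E (mon u * (xvar i l * Rp i j k - xvar i j * Rp i k l))"
    by (simp add: r1 r3 lin_diff right_diff_distrib)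
  also have "\<dots> = E (mon u * xvar j k * Gp i j l) - E (mon u * xvar j k * Gp i k l)
     - E (mon u * const \<beta> * Gp i k l) - E (mon u * xvar k l * Gp i j k)
     + E (mon u * xvar k l * Gp i j l) + E (mon u * const \<beta> * Gp i j l)
     + E (mon u * xvar i j * Gp j k l) - E (mon u * xvar i l * Gp j k l)"
    unfolding P2 by (simp add: algebra_simps lin_add lin_diff)
  also have "\<dots> = 0"
  proof -
    have "E (mon u * xvar j k * Gp i j l) = 0" "E (mon u * xvar j k * Gp i k l) = 0"
      "E (mon u * const \<beta> * Gp i k l) = 0" "E (mon u * xvar k l * Gp i j k) = 0"
      "E (mon u * xvar k l * Gp i j l) = 0" "E (mon u * const \<beta> * Gp i j l) = 0"
      "E (mon u * xvar i j * Gp j k l) = 0" "E (mon u * xvar i l * Gp j k l) = 0"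
      using o wts by (auto intro!: zc dest: kc simp: keys_xvar)
    then show ?thesis by simp
  qed
  finally have B: "E (red (i, j, k) M) = E (red (i, k, l) M)" by simp
  from A B show ?thesis by simp
qed


lemma triple_all:
  assumes Z: "\<And>M' f. wt M' < wt M \<Longrightarrow> f \<in> forks M' \<Longrightarrow> N M' = E (red f M')"
    and o: "1 \<le> i" "i < a" "a < b" "b < c" "c \<le> n"
    and lk: "1 \<le> Poly_Mapping.lookup M (i, a)" "1 \<le> Poly_Mapping.lookup M (i, b)" "1 \<le> Poly_Mapping.lookup M (i, c)"
    and f: "fa \<in> {(i, a, b), (i, a, c), (i, b, c)}" "fb \<in> {(i, a, b), (i, a, c), (i, b, c)}"
  shows "E (red fa M) = E (red fb M)"
  using triple[OF Z o lk] f by auto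

lemma diamond_step:
  assumes Z: "\<And>M' f. wt M' < wt M \<Longrightarrow> f \<in> forks M' \<Longrightarrow> N M' = E (red f M')"
    and f0: "(i, j, k) \<in> forks M" and f1: "(i', j', k') \<in> forks M"
  shows "E (red (i, j, k) M) = E (red (i', j', k') M)"
proof (cases "i \<noteq> i' \<or> {j, k} \<inter> {j', k'} = {}")
  case True
  define L0 where "L0 = Lm i j k"
  define L1 where "L1 = Lm i' j' k'"
  define u where "u = M - (L0 + L1)"
  have M: "M = u + L0 + L1"
    by (rule poly_mapping_eqI) (use True f0 f1 in \<open>auto simp: u_def L0_def L1_def forks_def lookup_add lookup_minus lookup_Lm\<close>)
  have e0: "M - L0 = u + L1" by (metis M add.assoc add.commute add_diff_cancel_right')
  have e1: "M - L1 = u + L0" by (metis M add_diff_cancel_right')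
  have v0: "1 \<le> i" "i < j" "j < k" "k \<le> n" and v1: "1 \<le> i'" "i' < j'" "j' < k'" "k' \<le> n"
    using f0 f1 by (auto simp: forks_def)
  have r0: "red (i, j, k) M = mon u * Rp i j k * (Gp i' j' k' + Rp i' j' k')"
    by (simp add: red_def L0_def[symmetric] e0 mon_add L1_def Lm_mon Gp_def)
  have r1: "red (i', j', k') M = mon u * Rp i' j' k' * (Gp i j k + Rp i j k)"
    by (simp add: red_def L1_def[symmetric] e1 mon_add L0_def Lm_mon Gp_def)
  have "red (i, j, k) M - red (i', j', k') M = mon u * Rp i j k * Gp i' j' k' - mon u * Rp i' j' k' * Gp i j k"
    unfolding r0 r1 by (simp add: algebra_simps)
  moreover have "E (mon u * Rp i j k * Gp i' j' k') = 0"
  proof (rule zero_comb[OF Z v1])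
    fix t assume "t \<in> Poly_Mapping.keys (mon u * Rp i j k)"
    then obtain s where "t = u + s" "s \<in> Poly_Mapping.keys (Rp i j k)" using keys_mon_mult by blast
    moreover have "wt s < wt L0" using wt_Rp[OF v0] calculation(2) L0_def by simp
    ultimately show "wt (t + Lm i' j' k') < wt M" by (simp add: M wt_add L1_def[symmetric])
  qed
  moreover have "E (mon u * Rp i' j' k' * Gp i j k) = 0"
  proof (rule zero_comb[OF Z v0])
    fix t assume "t \<in> Poly_Mapping.keys (mon u * Rp i' j' k')"
    then obtain s where "t = u + s" "s \<in> Poly_Mapping.keys (Rp i' j' k')" using keys_mon_mult by blast
    moreover have "wt s < wt L1" using wt_Rp[OF v1] calculation(2) L1_def by simp
    ultimately show "wt (t + Lm i j k) < wt M" by (simp add: M wt_add L0_def[symmetric])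
  qed
  ultimately have "E (red (i, j, k) M) - E (red (i', j', k') M) = 0"
    by (metis lin_diff diff_zero)
  then show ?thesis by simp
next
  case False
  then have ii: "i' = i" and sh: "j = j' \<or> j = k' \<or> k = j' \<or> k = k'" by auto
  show ?thesis
  proof (cases "(j, k) = (j', k')")
    case True then show ?thesis using ii by simp
  next
    case ne: False
    have v: "1 \<le> i" "i < j" "j < k" "k \<le> n" "i < j'" "j' < k'" "k' \<le> n"
      and lk: "1 \<le> Poly_Mapping.lookup M (i, j)" "1 \<le> Poly_Mapping.lookup M (i, k)"
         "1 \<le> Poly_Mapping.lookup M (i, j')" "1 \<le> Poly_Mapping.lookup M (i, k')"
      using f0 f1 ii by (auto simp: forks_def)
    consider (a) "j = j'" "k < k'" | (b) "j = j'" "k' < k" | (c) "j = k'" | (d) "k = j'"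
      | (e) "k = k'" "j < j'" | (f) "k = k'" "j' < j"
      using sh ne by (metis linorder_neqE_nat)
    then show ?thesis
    proof cases
      case a then show ?thesis using triple_all[OF Z, where i=i and a=j and b=k and c=k' and fa="(i,j,k)" and fb="(i',j',k')"] v lk ii by auto
    next
      case b then show ?thesis using triple_all[OF Z, where i=i and a=j and b=k' and c=k and fa="(i,j,k)" and fb="(i',j',k')"] v lk ii by auto
    next
      case c then show ?thesis using triple_all[OF Z, where i=i and a=j' and b=j and c=k and fa="(i,j,k)" and fb="(i',j',k')"] v lk ii by auto
    next
      case d then show ?thesis using triple_all[OF Z, where i=i and a=j and b=k and c=k' and fa="(i,j,k)" and fb="(i',j',k')"] v lk ii by auto
    next
      case e then show ?thesis using triple_all[OF Z, where i=i and a=j and b=j' and c=k and fa="(i,j,k)" and fb="(i',j',k')"] v lk ii by auto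
    next
      case f then show ?thesis using triple_all[OF Z, where i=i and a=j' and b=j and c=k and fa="(i,j,k)" and fb="(i',j',k')"] v lk ii by auto
    qed
  qed
qed

lemma diamond: "f \<in> forks M \<Longrightarrow> N M = E (red f M)"
proof (induction "wt M" arbitrary: M f rule: less_induct)
  case less
  have Z: "\<And>M' f. wt M' < wt M \<Longrightarrow> f \<in> forks M' \<Longrightarrow> N M' = E (red f M')"
    using less.hyps by blast
  have ne: "forks M \<noteq> {}" using less.prems by auto
  then have sf: "(SOME f. f \<in> forks M) \<in> forks M" by (meson ex_in_conv someI_ex)
  obtain i j k where s: "(SOME f. f \<in> forks M) = (i, j, k)" by (metis prod_cases3)
  obtain i' j' k' where f: "f = (i', j', k')" by (metis prod_cases3)
  have "N M = E (red (i, j, k) M)" using N_unfold ne s by simp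
  also have "\<dots> = E (red (i', j', k') M)"
    by (rule diamond_step[OF Z]) (use sf s less.prems f in auto)
  finally show ?case using f by simp
qed

lemma zero_all:
  assumes v: "1 \<le> i" "i < j" "j < k" "k \<le> n"
  shows "E (c * Gp i j k) = 0"
proof (rule zero_comb[OF _ v])
  let ?W = "Suc (\<Sum>t\<in>Poly_Mapping.keys c. wt (t + Lm i j k))"
  show "\<And>M' f. wt M' < ?W \<Longrightarrow> f \<in> forks M' \<Longrightarrow> N M' = E (red f M')" by (rule diamond)
  fix t assume "t \<in> Poly_Mapping.keys c"
  then have "wt (t + Lm i j k) \<le> (\<Sum>t\<in>Poly_Mapping.keys c. wt (t + Lm i j k))"
    by (intro member_le_sum) auto
  then show "wt (t + Lm i j k) < ?W" by simp
qed


lemma forkless_mon_iff: "forkless_mon n m \<longleftrightarrow> forks m = {}"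
proof -
  have "mon_dvd (xmon i j + xmon i k) m \<longleftrightarrow> 1 \<le> Poly_Mapping.lookup m (i, j) \<and> 1 \<le> Poly_Mapping.lookup m (i, k)"
    if "j < k" for i j k
  proof
    assume "mon_dvd (xmon i j + xmon i k) m"
    then have "Poly_Mapping.lookup (xmon i j + xmon i k) (i, j) \<le> Poly_Mapping.lookup m (i, j)"
      "Poly_Mapping.lookup (xmon i j + xmon i k) (i, k) \<le> Poly_Mapping.lookup m (i, k)"
      by (auto simp: mon_dvd_def)
    then show "1 \<le> Poly_Mapping.lookup m (i, j) \<and> 1 \<le> Poly_Mapping.lookup m (i, k)"
      using that by (simp add: lookup_add lookup_xmon)
  next
    assume "1 \<le> Poly_Mapping.lookup m (i, j) \<and> 1 \<le> Poly_Mapping.lookup m (i, k)"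
    then show "mon_dvd (xmon i j + xmon i k) m"
      using that by (auto simp: mon_dvd_def lookup_add lookup_xmon)
  qed
  then show ?thesis
    unfolding forkless_mon_def forks_def by auto
qed

lemma keys_minus_nat: "Poly_Mapping.keys (A - B :: monom) \<subseteq> Poly_Mapping.keys A"
  by (auto simp: in_keys_iff lookup_minus)

lemma keys_xmon: "Poly_Mapping.keys (xmon i j) = {(i, j)}"
  by (simp add: xmon_def)

lemma red_monX:
  assumes f: "f \<in> forks M" and M: "is_monomial_X n M" and m: "m \<in> Poly_Mapping.keys (red f M)"
  shows "is_monomial_X n m"
proof -
  obtain i j k where fe: "f = (i, j, k)" by (metis prod_cases3)
  have v: "1 \<le> i" "i < j" "j < k" "k \<le> n" using f fe by (auto simp: forks_def)
  have "m \<in> Poly_Mapping.keys (mon (M - Lm i j k) * Rp i j k)" using m fe by (simp add: red_def)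
  then obtain s where ms: "m = (M - Lm i j k) + s" and s: "s \<in> Poly_Mapping.keys (Rp i j k)"
    using keys_mon_mult by blast
  have ks: "Poly_Mapping.keys s \<subseteq> var_index n"
    using s keys_Rp[of i j k] v
    by (auto simp: var_index_def keys_xmon dest!: set_mp[OF keys_add])
  have "Poly_Mapping.keys (M - Lm i j k) \<subseteq> var_index n"
    using keys_minus_nat M by (auto simp: is_monomial_X_def)
  then show ?thesis
    using ks keys_add[of "M - Lm i j k" s] by (auto simp: is_monomial_X_def ms)
qed

lemma N_props:
  "is_monomial_X n M \<Longrightarrow> m \<in> Poly_Mapping.keys (N M) \<Longrightarrow> is_monomial_X n m \<and> forks m = {}"
proof (induction "wt M" arbitrary: M m rule: less_induct)
  case less
  show ?case
  proof (cases "forks M = {}")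
    case True
    then show ?thesis using less.prems by (simp add: N_unfold keys_mon)
  next
    case False
    then have sf: "(SOME f. f \<in> forks M) \<in> forks M" by (meson ex_in_conv someI_ex)
    have "m \<in> Poly_Mapping.keys (E (red (SOME f. f \<in> forks M) M))"
      using less.prems False by (simp add: N_unfold)
    then obtain m' where m': "m' \<in> Poly_Mapping.keys (red (SOME f. f \<in> forks M) M)"
      and mm: "m \<in> Poly_Mapping.keys (N m')"
      using keys_lin by blast
    show ?thesis
      using less.hyps[OF red_wt[OF sf m'] red_monX[OF sf less.prems(1) m'] mm] .
  qed
qed

lemma E_forkless: "(\<And>m. m \<in> Poly_Mapping.keys q \<Longrightarrow> forks m = {}) \<Longrightarrow> E q = q"
proof -
  assume a: "\<And>m. m \<in> Poly_Mapping.keys q \<Longrightarrow> forks m = {}"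
  have "E q = (\<Sum>m\<in>Poly_Mapping.keys q. const (Poly_Mapping.lookup q m) * mon m)"
    unfolding lin_def by (rule sum.cong) (auto simp: N_unfold a)
  also have "\<dots> = q"
    by (subst (2) poly_expand) (simp add: single_as_const)
  finally show ?thesis .
qed

lemma gens_Gp: "g \<in> gens n \<beta> \<alpha> \<Longrightarrow> \<exists>i j k. 1 \<le> i \<and> i < j \<and> j < k \<and> k \<le> n \<and> g = - Gp i j k"
  unfolding gens_def Gp_def Rp_def by (auto simp: algebra_simps)

lemma Gp_gens: "1 \<le> i \<Longrightarrow> i < j \<Longrightarrow> j < k \<Longrightarrow> k \<le> n \<Longrightarrow> - Gp i j k \<in> gens n \<beta> \<alpha>"
  unfolding gens_def Gp_def Rp_def by (auto simp: algebra_simps intro!: exI)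

lemma E_ideal: "x \<in> idealJ n \<beta> \<alpha> \<Longrightarrow> E x = 0"
proof -
  assume "x \<in> idealJ n \<beta> \<alpha>"
  then obtain S c where x: "x = (\<Sum>g\<in>S. c g * g)" and S: "finite S" "S \<subseteq> gens n \<beta> \<alpha>"
    unfolding idealJ_def by blast
  have "E (c g * g) = 0" if gS: "g \<in> S" for g
  proof -
    obtain i j k where "1 \<le> i" "i < j" "j < k" "k \<le> n" "g = - Gp i j k"
      using gens_Gp S gS by blast
    then show ?thesis using zero_all[of i j k "c g"] by (simp add: lin_uminus)
  qed
  then show ?thesis by (simp add: x lin_sum[OF S(1)])
qed


lemma mon_polyX: "is_monomial_X n u \<Longrightarrow> (mon u :: 'a mpoly) \<in> polyX n"
  by (simp add: polyX_def keys_mon)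

lemma diff_ideal:
  assumes "\<And>m. m \<in> Poly_Mapping.keys p \<Longrightarrow> mon m - N m \<in> idealJ n \<beta> \<alpha>"
  shows "p - E p \<in> idealJ n \<beta> \<alpha>"
proof -
  have "p = (\<Sum>m\<in>Poly_Mapping.keys p. const (Poly_Mapping.lookup p m) * mon m)"
    by (subst (1) poly_expand) (simp add: single_as_const)
  then have "p - E p = (\<Sum>m\<in>Poly_Mapping.keys p. const (Poly_Mapping.lookup p m) * (mon m - N m))"
    unfolding lin_def by (metis (no_types, lifting) right_diff_distrib sum.cong sum_subtractf)
  also have "\<dots> \<in> idealJ n \<beta> \<alpha>"
    by (rule idealJ_sum) (auto intro: idealJ_smult assms)
  finally show ?thesis .
qed

lemma N_ideal: "is_monomial_X n M \<Longrightarrow> mon M - N M \<in> idealJ n \<beta> \<alpha>"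
proof (induction "wt M" arbitrary: M rule: less_induct)
  case less
  show ?case
  proof (cases "forks M = {}")
    case True then show ?thesis by (simp add: N_unfold idealJ_0)
  next
    case False
    define f where "f = (SOME f. f \<in> forks M)"
    have sf: "f \<in> forks M" unfolding f_def using False by (meson ex_in_conv someI_ex)
    obtain i j k where fe: "f = (i, j, k)" by (metis prod_cases3)
    have v: "1 \<le> i" "i < j" "j < k" "k \<le> n" using sf fe by (auto simp: forks_def)
    define u where "u = M - Lm i j k"
    have Mu: "M = u + Lm i j k" using fork_decomp sf fe u_def by blast
    have red: "red f M = mon u * Rp i j k" by (simp add: red_def fe u_def)
    have mM: "mon M = mon u * (Gp i j k + Rp i j k)"
      by (subst Mu) (simp add: mon_add Lm_mon Gp_def)
    have 1: "mon M - red f M = (- mon u) * (- Gp i j k)"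
      by (simp add: mM red algebra_simps)
    have "is_monomial_X n u"
      using less.prems keys_minus_nat by (auto simp: is_monomial_X_def u_def)
    then have "- mon u \<in> polyX n" by (auto simp: polyX_def in_keys_iff mon_def lookup_single when_def split: if_splits)
    then have A: "mon M - red f M \<in> idealJ n \<beta> \<alpha>"
      unfolding 1 by (rule idealJ_gen) (rule Gp_gens[OF v])
    have B: "red f M - E (red f M) \<in> idealJ n \<beta> \<alpha>"
      by (rule diff_ideal) (rule less.hyps[OF red_wt[OF sf] red_monX[OF sf less.prems]])
    have "N M = E (red f M)" using False by (simp add: N_unfold f_def)
    then have "mon M - N M = (mon M - red f M) + (red f M - E (red f M))" by simp
    then show ?thesis using idealJ_add[OF A B] by simp
  qed
qed

end

theorem theorem4p3:
  fixes \<beta> \<alpha> :: "'a::comm_ring_1" and n :: nat and p :: "'a mpoly"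
  assumes "n \<ge> 1" and "p \<in> polyX n"
  shows "\<exists>!q. q \<in> polyX n \<and> forkless n q \<and> p - q \<in> idealJ n \<beta> \<alpha>"
proof -
  interpret fk n \<beta> \<alpha> .
  have pk: "\<And>m. m \<in> Poly_Mapping.keys p \<Longrightarrow> is_monomial_X n m"
    using assms(2) by (simp add: polyX_def)
  have qk: "is_monomial_X n m \<and> forks m = {}" if mq: "m \<in> Poly_Mapping.keys (E p)" for m
  proof -
    obtain m' where "m' \<in> Poly_Mapping.keys p" "m \<in> Poly_Mapping.keys (N m')"
      using keys_lin[of N p] mq by blast
    then show ?thesis using N_props pk by blast
  qed
  have q1: "E p \<in> polyX n" using qk by (simp add: polyX_def)
  have q2: "forkless n (E p)" using qk by (simp add: forkless_def forkless_mon_iff)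
  have q3: "p - E p \<in> idealJ n \<beta> \<alpha>"
    by (rule diff_ideal) (rule N_ideal[OF pk])
  show ?thesis
  proof (rule ex1I[of _ "E p"])
    show "E p \<in> polyX n \<and> forkless n (E p) \<and> p - E p \<in> idealJ n \<beta> \<alpha>" using q1 q2 q3 by blast
  next
    fix y assume y: "y \<in> polyX n \<and> forkless n y \<and> p - y \<in> idealJ n \<beta> \<alpha>"
    have Ey: "E y = y"
      by (rule E_forkless) (use y in \<open>auto simp: forkless_def forkless_mon_iff\<close>)
    have "E (p - y) = 0" using y E_ideal by blast
    then show "y = E p" using Ey by (simp add: lin_diff)
  qed
qed

end
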